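(* For every $M>0$ there exists a function $\phi:\mathbb{R}^2\to\mathbb{R}$ generated by a $\sigma$-activated network with width $9$ and depth $2$ such that $\phi(x,y)=xy$ for all $x,y\in[-M,M]$.
   Context: Let $\sigma_1:\mathbb{R}\to\mathbb{R}$ be the continuous triangular-wave function of period $2$: $\sigma_1(x)=|x|$ for $x\in[-1,1]$, $\sigma_1(x+2)=\sigma_1(x)$. The activation is $\sigma(x)=\sigma_1(x)$ for $x\ge0$ and $\sigma(x)=x/(|x|+1)$ for $x<0$, applied entrywise. A function generated by a $\sigma$-activated network with input dimension $n$, width $N$ and depth $L$ is a function of the form $\mathcal{L}_{\ell}\circ\sigma\circ\mathcal{L}_{\ell-1}\circ\cdots\circ\sigma\circ\mathcal{L}_0$ with $\ell\le L$ hidden layers, affine maps $\mathcal{L}_i$, $\mathcal{L}_0$ with domain $\mathbb{R}^n$, $\mathcal{L}_\ell$ with codomain $\mathbb{R}$, and at most $N$ neurons in each hidden layer. *)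

theory Defs
  imports "HOL-Analysis.Analysis"
begin

(* triangular wave of period 2: |x| on [-1,1], extended 2-periodically *)
definition sigma1 :: "real \<Rightarrow> real" where
  "sigma1 x = \<bar>x - 2 * real_of_int \<lfloor>(x + 1) / 2\<rfloor>\<bar>"

definition sigma :: "real \<Rightarrow> real" where
  "sigma x = (if x \<ge> 0 then sigma1 x else x / (\<bar>x\<bar> + 1))"

(* affine map R^a -> R^b, vectors represented as lists of length a resp. b *)
definition affine :: "nat \<Rightarrow> nat \<Rightarrow> (nat \<Rightarrow> nat \<Rightarrow> real) \<Rightarrow> (nat \<Rightarrow> real)
    \<Rightarrow> real list \<Rightarrow> real list" where
  "affine a b W c = (\<lambda>x. map (\<lambda>i. (\<Sum>j<a. W i j * x ! j) + c i) [0..<b])"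

(* hidden_map n ds g: g = sigma o L_{l-1} o ... o sigma o L_0 where L_0 : R^n -> R^(ds!0),
   L_k : R^(ds!(k-1)) -> R^(ds!k); l = length ds hidden layers, sigma entrywise *)
inductive hidden_map :: "nat \<Rightarrow> nat list \<Rightarrow> (real list \<Rightarrow> real list) \<Rightarrow> bool" where
  input: "hidden_map n [] (\<lambda>x. x)"
| layer: "hidden_map n ds g \<Longrightarrow> a = last (n # ds) \<Longrightarrow>
          hidden_map n (ds @ [b]) (\<lambda>x. map sigma (affine a b W c (g x)))"

(* functions R^n -> R (inputs as lists of length n) generated by a sigma-activated network
   of width N (at most N neurons per hidden layer) and depth L (at most L hidden layers) *)
definition sigma_net :: "nat \<Rightarrow> nat \<Rightarrow> nat \<Rightarrow> (real list \<Rightarrow> real) \<Rightarrow> bool" where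
  "sigma_net n N L f \<longleftrightarrow>
     (\<exists>ds g W c. hidden_map n ds g \<and> length ds \<le> L \<and> (\<forall>d\<in>set ds. d \<le> N) \<and>
        (\<forall>x. length x = n \<longrightarrow> f x = hd (affine (last (n # ds)) 1 W c (g x))))"

end

theory Submission
  imports Defs
begin

lemma sig_neg: "t < 0 \<Longrightarrow> sigma t = t / (1 - t)"
  by (simp add: sigma_def)

lemma sigA: "a > 1 \<Longrightarrow> sigma (1 - a) = 1/a - 1"
  by (simp add: sig_neg field_simps)

lemma sigA2: "a > 0 \<Longrightarrow> sigma (- a) = 1/(a+1) - 1"
  by (simp add: sig_neg field_simps)

lemma sigB: "P > 0 \<Longrightarrow> al > P \<Longrightarrow> sigma (1 - al * (1/P)) = P/al - 1"
proof -
  assume h: "P > 0" "al > P"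
  have "al / P > 1" using h by simp
  then have "1 - al * (1/P) < 0" by simp
  then show ?thesis using h by (simp add: sig_neg field_simps)
qed

lemma sq_piece:
  assumes "a > 1" "al > a*(a+1)"
  shows "sigma (1 - al * (sigma (1 - a)) + al * sigma (-a)) = a*(a+1)/al - 1"
proof -
  have P: "a*(a+1) > 0" using assms by simp
  have eq: "1 - al * (sigma (1 - a)) + al * sigma (-a) = 1 - al * (1/(a*(a+1)))"
    using assms(1) by (simp add: sigA sigA2 divide_simps) (simp add: algebra_simps)
  show ?thesis unfolding eq by (rule sigB[OF P assms(2)])
qed

theorem lemma16:
  fixes M :: real
  assumes "M > 0"
  shows "\<exists>\<phi>. sigma_net 2 9 2 \<phi> \<and>
           (\<forall>x y. x \<in> {-M..M} \<longrightarrow> y \<in> {-M..M} \<longrightarrow> \<phi> [x, y] = x * y)"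
proof -
  define c :: real where "c = 2*M+2"
  define al :: real where "al = (4*M+3)^2"
  define W1 :: "nat \<Rightarrow> nat \<Rightarrow> real" where
    "W1 = (\<lambda>i j. [[-1,-1],[-1,-1],[1,1],[1,1],[-1,1],[-1,1],[1,-1],[1,-1]] ! i ! j)"
  define c1 :: "nat \<Rightarrow> real" where "c1 = (\<lambda>i. [1-c,-c,1-c,-c,1-c,-c,1-c,-c] ! i)"
  define W2 :: "nat \<Rightarrow> nat \<Rightarrow> real" where
    "W2 = (\<lambda>i j. [[-al,al,0,0,0,0,0,0],[0,0,-al,al,0,0,0,0],[0,0,0,0,-al,al,0,0],[0,0,0,0,0,0,-al,al]] ! i ! j)"
  define c2 :: "nat \<Rightarrow> real" where "c2 = (\<lambda>i. 1)"
  define W3 :: "nat \<Rightarrow> nat \<Rightarrow> real" where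
    "W3 = (\<lambda>i j. [[al/8, al/8, -al/8, -al/8]] ! i ! j)"
  define c3 :: "nat \<Rightarrow> real" where "c3 = (\<lambda>i. 0)"
  define g where "g = (\<lambda>v. map sigma (affine 8 4 W2 c2 (map sigma (affine 2 8 W1 c1 v))))"
  have h0: "hidden_map 2 [] (\<lambda>x. x)" by (rule hidden_map.input)
  have h1: "hidden_map 2 [8] (\<lambda>v. map sigma (affine 2 8 W1 c1 v))"
    using hidden_map.layer[OF h0, of 2 8 W1 c1] by simp
  have h2: "hidden_map 2 [8,4] g"
    using hidden_map.layer[OF h1, of 8 4 W2 c2] by (simp add: g_def)
  define phi where "phi = (\<lambda>v. hd (affine 4 1 W3 c3 (g v)))"
  have net: "sigma_net 2 9 2 phi"
    unfolding sigma_net_def phi_def using h2 by (intro exI[of _ "[8,4]"] exI[of _ g]) auto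
  have val: "phi [x, y] = x * y" if hx: "x \<in> {-M..M}" and hy: "y \<in> {-M..M}" for x y
  proof -
    have bnd: "\<And>s. \<bar>s\<bar> \<le> 2*M \<Longrightarrow> c + s > 1 \<and> al > (c+s)*((c+s)+1)"
    proof -
      fix s :: real assume "\<bar>s\<bar> \<le> 2*M"
      then have a: "c + s \<ge> 2" "c + s \<le> 4*M+2" unfolding c_def by auto
      have "(c+s)*((c+s)+1) \<le> (4*M+2)*((4*M+2)+1)"
        using a by (intro mult_mono) auto
      also have "\<dots> < al" unfolding al_def using assms by (simp add: power2_eq_square algebra_simps)
      finally show "c + s > 1 \<and> al > (c+s)*((c+s)+1)" using a by auto
    qed
    have s1: "\<bar>x+y\<bar> \<le> 2*M" "\<bar>-(x+y)\<bar> \<le> 2*M" "\<bar>x-y\<bar> \<le> 2*M" "\<bar>y-x\<bar> \<le> 2*M"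
      using hx hy by auto
    have L1: "affine 2 8 W1 c1 [x,y] = [1-(c+(x+y)), -(c+(x+y)), 1-(c+(-(x+y))), -(c+(-(x+y))),
          1-(c+(x-y)), -(c+(x-y)), 1-(c+(y-x)), -(c+(y-x))]"
      by (simp add: affine_def W1_def c1_def eval_nat_numeral upt_rec)
    define a1 where "a1 = c+(x+y)"
    define a2 where "a2 = c+(-(x+y))"
    define a3 where "a3 = c+(x-y)"
    define a4 where "a4 = c+(y-x)"
    have b1: "a1 > 1" "al > a1*(a1+1)" using bnd[OF s1(1)] unfolding a1_def by auto
    have b2: "a2 > 1" "al > a2*(a2+1)" using bnd[OF s1(2)] unfolding a2_def by auto
    have b3: "a3 > 1" "al > a3*(a3+1)" using bnd[OF s1(3)] unfolding a3_def by auto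
    have b4: "a4 > 1" "al > a4*(a4+1)" using bnd[OF s1(4)] unfolding a4_def by auto
    have alp: "al \<noteq> 0" using b1 by (smt (verit) mult_pos_pos)
    have L2: "affine 8 4 W2 c2 (map sigma (affine 2 8 W1 c1 [x,y])) =
       [1 - al * sigma (1 - a1) + al * sigma (-a1), 1 - al * sigma (1 - a2) + al * sigma (-a2),
        1 - al * sigma (1 - a3) + al * sigma (-a3), 1 - al * sigma (1 - a4) + al * sigma (-a4)]"
      unfolding L1 a1_def[symmetric] a2_def[symmetric] a3_def[symmetric] a4_def[symmetric]
      by (simp add: affine_def W2_def c2_def eval_nat_numeral upt_rec)
    have "phi [x,y] = al/8 * (a1*(a1+1)/al - 1) + al/8 * (a2*(a2+1)/al - 1)
        - al/8 * (a3*(a3+1)/al - 1) - al/8 * (a4*(a4+1)/al - 1)"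
      unfolding phi_def g_def L2
      by (simp add: affine_def W3_def c3_def eval_nat_numeral upt_rec sq_piece b1 b2 b3 b4)
    also have "\<dots> = x * y" using alp unfolding a1_def a2_def a3_def a4_def
      by (simp add: divide_simps) (simp add: algebra_simps)
    finally show ?thesis .
  qed
  show ?thesis using net val by blast
qed

end
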